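(* Let $q=2^h$, let $\alpha\in{\rm GF}(q)$ be such that $X^2+X+\alpha$ is irreducible over ${\rm GF}(q)$, and let $G=\{M_{a,b,c,d}: a\in{\rm GF}(q)\setminus\{0\},\ b,c,d\in{\rm GF}(q),\ c^2+cd+\alpha d^2=1\}$, where $$M_{a,b,c,d}=\begin{pmatrix}1&0&0&0&0\\0&ac&\alpha ad&bc&\alpha bd\\0&ad&a(c+d)&bd&b(c+d)\\0&0&0&a^{-1}c&\alpha a^{-1}d\\0&0&0&a^{-1}d&a^{-1}(c+d)\end{pmatrix},$$ acting on the points (column vectors) of ${\rm PG}(4,q)$ by left multiplication. Then, under the action of $G$ on the planes of ${\rm PG}(4,q)$, there are $q^2-q$ distinct plane-orbits of size $q^3-q$, each consisting of planes any two of which intersect in exactly one point. *)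

theory Defs
  imports "HOL-Analysis.Analysis" "HOL-Computational_Algebra.Polynomial"
begin

text \<open>Points of PG(4,q) are 1-dimensional subspaces of GF(q)^5, planes are
3-dimensional subspaces of GF(q)^5 (vectors are columns, type 'a^5).\<close>

definition pg4_planes :: "('a::field ^ 5) set set" where
  "pg4_planes = {S. vec.subspace S \<and> vec.dim S = 3}"

definition M_abcd :: "'a::field \<Rightarrow> 'a \<Rightarrow> 'a \<Rightarrow> 'a \<Rightarrow> 'a \<Rightarrow> 'a ^ 5 ^ 5" where
  "M_abcd \<alpha> a b c d = vector [
     vector [1, 0, 0, 0, 0],
     vector [0, a * c, \<alpha> * a * d, b * c, \<alpha> * b * d],
     vector [0, a * d, a * (c + d), b * d, b * (c + d)],
     vector [0, 0, 0, inverse a * c, \<alpha> * inverse a * d],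
     vector [0, 0, 0, inverse a * d, inverse a * (c + d)]]"

definition groupG :: "'a::field \<Rightarrow> ('a ^ 5 ^ 5) set" where
  "groupG \<alpha> = {M_abcd \<alpha> a b c d | a b c d. a \<noteq> 0 \<and> c^2 + c * d + \<alpha> * d^2 = 1}"

text \<open>Image of a plane under a matrix acting on column vectors by left multiplication.\<close>
definition plane_image :: "'a::field ^ 5 ^ 5 \<Rightarrow> ('a ^ 5) set \<Rightarrow> ('a ^ 5) set" where
  "plane_image M S = (\<lambda>v. M *v v) ` S"

definition plane_orbit :: "('a::field ^ 5 ^ 5) set \<Rightarrow> ('a ^ 5) set \<Rightarrow> ('a ^ 5) set set" where
  "plane_orbit G S = {plane_image M S | M. M \<in> G}"

definition plane_orbits :: "('a::field ^ 5 ^ 5) set \<Rightarrow> ('a ^ 5) set set set" where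
  "plane_orbits G = {plane_orbit G S | S. S \<in> pg4_planes}"

text \<open>Two planes meet in exactly one point of PG(4,q): their intersection
(as subspaces) is 1-dimensional.\<close>
definition meet_in_one_point :: "('a::field ^ 5) set \<Rightarrow> ('a ^ 5) set \<Rightarrow> bool" where
  "meet_in_one_point S T \<longleftrightarrow> vec.dim (S \<inter> T) = 1"

end

theory Submission
  imports Defs "HOL-Number_Theory.Residues"
begin


lemma exhaust_5':
  fixes x :: 5
  shows "x = 1 \<or> x = 2 \<or> x = 3 \<or> x = 4 \<or> x = 5"
proof (induct x)
  case (of_int z)
  then have "z = 0 \<or> z = 1 \<or> z = 2 \<or> z = 3 \<or> z = 4" by fastforce
  then show ?case by auto
qed

lemma UNIV_5': "(UNIV::5 set) = {1, 2, 3, 4, 5}"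
  using exhaust_5' by auto

lemma sum_5': "sum f (UNIV::5 set) = f 1 + f 2 + f 3 + f 4 + f 5"
  unfolding UNIV_5' by (simp add: ac_simps)

definition pt :: "'a::zero \<Rightarrow> 'a \<Rightarrow> 'a \<Rightarrow> 'a \<Rightarrow> 'a \<Rightarrow> 'a^5" where
  "pt x1 x2 x3 x4 x5 = vector [x1, x2, x3, x4, x5]"

lemma pt_nth[simp]:
  "pt x1 x2 x3 x4 x5 $ 1 = x1" "pt x1 x2 x3 x4 x5 $ 2 = x2" "pt x1 x2 x3 x4 x5 $ 3 = x3"
  "pt x1 x2 x3 x4 x5 $ 4 = x4" "pt x1 x2 x3 x4 x5 $ 5 = x5"
  unfolding pt_def vector_def by simp_all



lemma vec5_eq_iff: "(x::'a^5) = y \<longleftrightarrow> x$1 = y$1 \<and> x$2 = y$2 \<and> x$3 = y$3 \<and> x$4 = y$4 \<and> x$5 = y$5"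
  unfolding vec_eq_iff using exhaust_5' by metis

lemma pt_eq_iff[simp]: "pt x1 x2 x3 x4 x5 = pt y1 y2 y3 y4 y5 \<longleftrightarrow> x1 = y1 \<and> x2 = y2 \<and> x3 = y3 \<and> x4 = y4 \<and> x5 = y5"
  by (simp add: vec5_eq_iff)

lemma pt_expand: "(x::'a::zero^5) = pt (x$1) (x$2) (x$3) (x$4) (x$5)"
  by (simp add: vec5_eq_iff)

lemma pt_add: "pt x1 x2 x3 x4 x5 + pt y1 y2 y3 y4 y5 = pt (x1+y1) (x2+y2) (x3+y3) (x4+y4) (x5+y5)"
  by (simp add: vec5_eq_iff)

lemma pt_scale: "k *s pt x1 x2 x3 x4 x5 = pt (k*x1) (k*x2) (k*x3) (k*x4) (k*x5)"
  by (simp add: vec5_eq_iff)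

lemma pt_zero: "(0::'a::zero^5) = pt 0 0 0 0 0"
  by (simp add: vec5_eq_iff)

lemma M_pt: "M_abcd al a b c d = pt (pt 1 0 0 0 0)
    (pt 0 (a * c) (al * a * d) (b * c) (al * b * d))
    (pt 0 (a * d) (a * (c + d)) (b * d) (b * (c + d)))
    (pt 0 0 0 (inverse a * c) (al * inverse a * d))
    (pt 0 0 0 (inverse a * d) (inverse a * (c + d)))"
  unfolding M_abcd_def pt_def ..

lemma M_mult: "M_abcd al a b c d *v pt x1 x2 x3 x4 x5 =
  pt x1 (a*c*x2 + al*a*d*x3 + b*c*x4 + al*b*d*x5)
        (a*d*x2 + a*(c+d)*x3 + b*d*x4 + b*(c+d)*x5)
        (inverse a*c*x4 + al*inverse a*d*x5)
        (inverse a*d*x4 + inverse a*(c+d)*x5)"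
  unfolding vec5_eq_iff M_pt matrix_vector_mult_def vec_lambda_beta sum_5' pt_nth
  by (simp add: algebra_simps)

definition F1 :: "'a::field \<Rightarrow> 'a \<Rightarrow> 'a \<Rightarrow> 'a \<Rightarrow> 'a \<Rightarrow> 'a \<Rightarrow> 'a \<Rightarrow> 'a \<Rightarrow> 'a" where
  "F1 al W1 m n1 n2 x v1 v2 = x*W1 + m * v1 + n1 * (v1+v2) + al*n2 * v2"
definition F2 :: "'a::field \<Rightarrow> 'a \<Rightarrow> 'a \<Rightarrow> 'a \<Rightarrow> 'a \<Rightarrow> 'a \<Rightarrow> 'a \<Rightarrow> 'a" where
  "F2 W2 m n1 n2 x v1 v2 = x*W2 + m * v2 + n1 * v2 + n2 * (v1+v2) + n2 * v2"

definition Pl :: "'a::field \<Rightarrow> 'a \<Rightarrow> 'a \<Rightarrow> 'a \<Rightarrow> 'a \<Rightarrow> 'a \<Rightarrow> ('a^5) set" where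
  "Pl al W1 W2 m n1 n2 = {y. y$2 = F1 al W1 m n1 n2 (y$1) (y$4) (y$5) \<and> y$3 = F2 W2 m n1 n2 (y$1) (y$4) (y$5)}"

lemma pt_in_Pl: "pt x (F1 al W1 m n1 n2 x v1 v2) (F2 W2 m n1 n2 x v1 v2) v1 v2 \<in> Pl al W1 W2 m n1 n2"
  by (simp add: Pl_def)

lemma Pl_elem: "y \<in> Pl al W1 W2 m n1 n2 \<Longrightarrow> y = pt (y$1) (F1 al W1 m n1 n2 (y$1) (y$4) (y$5)) (F2 W2 m n1 n2 (y$1) (y$4) (y$5)) (y$4) (y$5)"
  by (simp add: Pl_def vec5_eq_iff)

lemma Pl_subspace: "vec.subspace (Pl al W1 W2 m n1 n2)"
  unfolding vec.subspace_def Pl_def F1_def F2_def by (auto simp: algebra_simps)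

lemma Pl_dim: "vec.dim (Pl al W1 W2 m n1 n2) = 3"
proof -
  let ?P = "Pl al W1 W2 m n1 n2"
  define e0 where "e0 = pt 1 (F1 al W1 m n1 n2 1 0 0) (F2 W2 m n1 n2 1 0 0) 0 (0::'a)"
  define e1 where "e1 = pt 0 (F1 al W1 m n1 n2 0 1 0) (F2 W2 m n1 n2 0 1 0) 1 (0::'a)"
  define e2 where "e2 = pt 0 (F1 al W1 m n1 n2 0 0 1) (F2 W2 m n1 n2 0 0 1) 0 (1::'a)"
  have B: "{e0, e1, e2} \<subseteq> ?P" unfolding e0_def e1_def e2_def using pt_in_Pl by blast
  have "?P \<subseteq> vec.span {e0, e1, e2}"
  proof
    fix y assume y: "y \<in> ?P"
    have "y = (y$1) *s e0 + (y$4) *s e1 + (y$5) *s e2"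
      using y unfolding Pl_def e0_def e1_def e2_def
      by (simp add: vec5_eq_iff F1_def F2_def algebra_simps)
    also have "\<dots> \<in> vec.span {e0, e1, e2}"
      by (intro vec.span_add vec.span_scale vec.span_base) auto
    finally show "y \<in> vec.span {e0, e1, e2}" .
  qed
  hence sp: "vec.span {e0, e1, e2} = ?P"
    using vec.span_subspace[OF B _ Pl_subspace] by blast
  have s1: "vec.subspace {y::'a^5. y$1 = 0}" unfolding vec.subspace_def by auto
  have s2: "vec.subspace {y::'a^5. y$1 = 0 \<and> y$4 = 0}" unfolding vec.subspace_def by auto
  have n12: "e0 \<notin> vec.span {e1, e2}"
  proof
    assume "e0 \<in> vec.span {e1, e2}"
    moreover have "vec.span {e1, e2} \<subseteq> {y. y$1 = 0}"
      by (rule vec.span_minimal[OF _ s1]) (auto simp: e1_def e2_def)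
    ultimately show False by (auto simp: e0_def)
  qed
  have n2: "e1 \<notin> vec.span {e2}"
  proof
    assume "e1 \<in> vec.span {e2}"
    moreover have "vec.span {e2} \<subseteq> {y. y$1 = 0 \<and> y$4 = 0}"
      by (rule vec.span_minimal[OF _ s2]) (auto simp: e2_def)
    ultimately show False by (auto simp: e1_def)
  qed
  have e2nz: "e2 \<noteq> 0" by (simp add: e2_def pt_zero)
  have ind: "vec.independent {e0, e1, e2}"
    by (intro vec.independent_insertI n12 n2) (use e2nz in \<open>auto simp: vec.independent_insert vec.independent_empty\<close>)
  have d: "e0 \<noteq> e1" "e0 \<noteq> e2" "e1 \<noteq> e2" by (auto simp: e0_def e1_def e2_def)
  have "vec.dim ?P = card {e0, e1, e2}"
    using vec.dim_span_eq_card_independent[OF ind] sp by simp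
  also have "\<dots> = 3" using d by simp
  finally show ?thesis .
qed

lemma cross_kernel:
  fixes r1 r2 r3 q1 q2 q3 x1 x2 x3 :: "'a::field"
  assumes e1: "r1*x1 + r2*x2 + r3*x3 = 0" and e2: "q1*x1 + q2*x2 + q3*x3 = 0"
    and nz: "(r2*q3 - r3*q2, r3*q1 - r1*q3, r1*q2 - r2*q1) \<noteq> (0,0,0)"
  shows "\<exists>k. x1 = k * (r2*q3 - r3*q2) \<and> x2 = k * (r3*q1 - r1*q3) \<and> x3 = k * (r1*q2 - r2*q1)"
proof -
  define c1 where "c1 = r2*q3 - r3*q2"
  define c2 where "c2 = r3*q1 - r1*q3"
  define c3 where "c3 = r1*q2 - r2*q1"
  have i1: "x2*c3 - x3*c2 = r1*(q1*x1 + q2*x2 + q3*x3) - q1*(r1*x1 + r2*x2 + r3*x3)"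
    unfolding c2_def c3_def by (simp add: algebra_simps)
  have i2: "x3*c1 - x1*c3 = r2*(q1*x1 + q2*x2 + q3*x3) - q2*(r1*x1 + r2*x2 + r3*x3)"
    unfolding c1_def c3_def by (simp add: algebra_simps)
  have i3: "x1*c2 - x2*c1 = r3*(q1*x1 + q2*x2 + q3*x3) - q3*(r1*x1 + r2*x2 + r3*x3)"
    unfolding c1_def c2_def by (simp add: algebra_simps)
  have j1: "x2*c3 = x3*c2" and j2: "x3*c1 = x1*c3" and j3: "x1*c2 = x2*c1"
    using i1 i2 i3 e1 e2 by auto
  have "\<exists>k. x1 = k * c1 \<and> x2 = k * c2 \<and> x3 = k * c3"
  proof (cases "c1 \<noteq> 0")
    case True
    show ?thesis
      by (rule exI[of _ "x1 / c1"]) (use True j2 j3 in \<open>auto simp: field_simps\<close>)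
  next
    case F1: False
    show ?thesis
    proof (cases "c2 \<noteq> 0")
      case True
      show ?thesis
        by (rule exI[of _ "x2 / c2"]) (use True j1 j3 in \<open>auto simp: field_simps\<close>)
    next
      case False
      with F1 nz have c3: "c3 \<noteq> 0" unfolding c1_def c2_def c3_def by auto
      show ?thesis
        by (rule exI[of _ "x3 / c3"]) (use c3 j1 j2 in \<open>auto simp: field_simps\<close>)
    qed
  qed
  thus ?thesis unfolding c1_def c2_def c3_def .
qed

definition crossv :: "'a::field \<Rightarrow> 'a \<Rightarrow> 'a \<Rightarrow> 'a \<Rightarrow> 'a \<Rightarrow> 'a \<Rightarrow> 'a \<times> 'a \<times> 'a" where
  "crossv r1 r2 r3 q1 q2 q3 = (r2*q3 - r3*q2, r3*q1 - r1*q3, r1*q2 - r2*q1)"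

lemma Pl_meet:
  fixes al W1 W2 m n1 n2 W1' W2' m' n1' n2' :: "'a::field"
  defines "dm \<equiv> m - m'" and "dn1 \<equiv> n1 - n1'" and "dn2 \<equiv> n2 - n2'"
  assumes nz: "crossv (W1 - W1') (dm + dn1) (dn1 + al*dn2) (W2 - W2') dn2 (dm + dn1 + 2*dn2) \<noteq> (0,0,0)"
  shows "meet_in_one_point (Pl al W1 W2 m n1 n2) (Pl al W1' W2' m' n1' n2')"
proof -
  let ?P = "Pl al W1 W2 m n1 n2" and ?Q = "Pl al W1' W2' m' n1' n2'"
  define r1 where "r1 = W1 - W1'"
  define r2 where "r2 = dm + dn1"
  define r3 where "r3 = dn1 + al*dn2"
  define q1 where "q1 = W2 - W2'"
  define q2 where "q2 = dn2"
  define q3 where "q3 = dm + dn1 + 2*dn2"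
  define c1 where "c1 = r2*q3 - r3*q2"
  define c2 where "c2 = r3*q1 - r1*q3"
  define c3 where "c3 = r1*q2 - r2*q1"
  have d1: "F1 al W1 m n1 n2 x v1 v2 - F1 al W1' m' n1' n2' x v1 v2 = r1*x + r2 * v1 + r3 * v2" for x v1 v2
    unfolding F1_def r1_def r2_def r3_def dm_def dn1_def dn2_def by (simp add: algebra_simps)
  have d2: "F2 W2 m n1 n2 x v1 v2 - F2 W2' m' n1' n2' x v1 v2 = q1*x + q2 * v1 + q3 * v2" for x v1 v2
    unfolding F2_def q1_def q2_def q3_def dm_def dn1_def dn2_def by (simp add: algebra_simps)
  have cnz: "(c1, c2, c3) \<noteq> (0,0,0)" using nz
    unfolding crossv_def c1_def c2_def c3_def r1_def r2_def r3_def q1_def q2_def q3_def .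
  define yc where "yc = pt c1 (F1 al W1 m n1 n2 c1 c2 c3) (F2 W2 m n1 n2 c1 c2 c3) c2 c3"
  have ycP: "yc \<in> ?P" unfolding yc_def by (rule pt_in_Pl)
  have "r1*c1 + r2*c2 + r3*c3 = 0" "q1*c1 + q2*c2 + q3*c3 = 0"
    unfolding c1_def c2_def c3_def by (simp_all add: algebra_simps)
  hence "F1 al W1 m n1 n2 c1 c2 c3 = F1 al W1' m' n1' n2' c1 c2 c3"
        "F2 W2 m n1 n2 c1 c2 c3 = F2 W2' m' n1' n2' c1 c2 c3"
    using d1[of c1 c2 c3] d2[of c1 c2 c3] by simp_all
  hence ycQ: "yc \<in> ?Q" unfolding yc_def by (metis pt_in_Pl)
  have ycnz: "yc \<noteq> 0" using cnz unfolding yc_def pt_zero by auto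
  have sub: "vec.subspace (?P \<inter> ?Q)" by (intro vec.subspace_inter Pl_subspace)
  have "?P \<inter> ?Q \<subseteq> vec.span {yc}"
  proof
    fix y assume y: "y \<in> ?P \<inter> ?Q"
    hence yP: "y = pt (y$1) (F1 al W1 m n1 n2 (y$1) (y$4) (y$5)) (F2 W2 m n1 n2 (y$1) (y$4) (y$5)) (y$4) (y$5)"
      using Pl_elem by blast
    from y have "y$2 = F1 al W1' m' n1' n2' (y$1) (y$4) (y$5)" "y$3 = F2 W2' m' n1' n2' (y$1) (y$4) (y$5)"
      by (auto simp: Pl_def)
    moreover from y have "y$2 = F1 al W1 m n1 n2 (y$1) (y$4) (y$5)" "y$3 = F2 W2 m n1 n2 (y$1) (y$4) (y$5)"
      by (auto simp: Pl_def)
    ultimately have "r1*(y$1) + r2*(y$4) + r3*(y$5) = 0" "q1*(y$1) + q2*(y$4) + q3*(y$5) = 0"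
      using d1[of "y$1" "y$4" "y$5"] d2[of "y$1" "y$4" "y$5"] by simp_all
    from cross_kernel[OF this] cnz obtain k where
      k: "y$1 = k*c1" "y$4 = k*c2" "y$5 = k*c3"
      unfolding c1_def c2_def c3_def by blast
    have "y = k *s yc"
      by (subst yP) (simp add: k yc_def pt_scale F1_def F2_def algebra_simps)
    thus "y \<in> vec.span {yc}" by (simp add: vec.span_scale vec.span_base)
  qed
  hence "vec.span {yc} = ?P \<inter> ?Q"
    using vec.span_subspace[OF _ _ sub] ycP ycQ by blast
  hence "vec.dim (?P \<inter> ?Q) = vec.dim {yc}" by (metis vec.dim_span)
  thus ?thesis using ycnz by (simp add: meet_in_one_point_def)
qed

lemma c2_neg: "(2::'a::field) = 0 \<Longrightarrow> - (x::'a) = x"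
  by (metis add_eq_0_iff mult_2 mult_zero_left one_add_one distrib_right mult_1)
lemma c2_diff: "(2::'a::field) = 0 \<Longrightarrow> (x::'a) - y = x + y"
  by (metis c2_neg diff_conv_add_uminus)
lemma c2_aa: "(2::'a::field) = 0 \<Longrightarrow> (x::'a) + x = 0"
  by (metis c2_neg add_eq_0_iff)
lemma c2_aab: "(2::'a::field) = 0 \<Longrightarrow> (x::'a) + (x + y) = y"
  by (metis c2_aa add.assoc add_0)

lemma c2_bit0: "(2::'a::field) = 0 \<Longrightarrow> (numeral (Num.Bit0 n) :: 'a) = 0"
  by (simp only: numeral_Bit0 c2_aa)
lemma c2_bit1: "(2::'a::field) = 0 \<Longrightarrow> (numeral (Num.Bit1 n) :: 'a) = 1"
  by (simp only: numeral_Bit1 c2_aa add_0)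

lemma idA1:
  fixes al a b c d wa wb x ya yb :: "'a::field"
  assumes two: "(2::'a) = 0" and a: "a \<noteq> 0"
  shows "F1 al ((a*c)*wa + al*(a*d)*wb) (a*b) ((a*c)^2 + al*(a*d)^2) ((a*d)^2) x
           (inverse a*c*ya + al*inverse a*d*yb) (inverse a*d*ya + inverse a*(c+d)*yb)
       = (a*c*(F1 al wa 0 1 0 x ya yb) + al*a*d*(F2 wb 0 1 0 x ya yb) + b*c*ya + al*b*d*yb)
         + ((c^2 + c*d + al*d^2) + 1) * a * (c*(ya+yb) + al*d*yb)"
proof -
  note C2 = c2_neg[OF two] c2_diff[OF two] c2_aa[OF two] c2_aab[OF two] c2_bit0[OF two] c2_bit1[OF two]
  show ?thesis using a unfolding F1_def F2_def
    by (simp add: field_simps) (simp add: C2 two algebra_simps power2_eq_square)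
qed

lemma idA2:
  fixes al a b c d wa wb x ya yb :: "'a::field"
  assumes two: "(2::'a) = 0" and a: "a \<noteq> 0"
  shows "F2 ((a*c)*wb + (a*d)*wa + (a*d)*wb) (a*b) ((a*c)^2 + al*(a*d)^2) ((a*d)^2) x
           (inverse a*c*ya + al*inverse a*d*yb) (inverse a*d*ya + inverse a*(c+d)*yb)
       = (a*d*(F1 al wa 0 1 0 x ya yb) + a*(c+d)*(F2 wb 0 1 0 x ya yb) + b*d*ya + b*(c+d)*yb)
         + ((c^2 + c*d + al*d^2) + 1) * a * (d*(ya+yb) + (c+d)*yb)"
proof -
  note C2 = c2_neg[OF two] c2_diff[OF two] c2_aa[OF two] c2_aab[OF two] c2_bit0[OF two] c2_bit1[OF two]
  show ?thesis using a unfolding F1_def F2_def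
    by (simp add: field_simps) (simp add: C2 two algebra_simps power2_eq_square)
qed

lemma idB:
  fixes al a b c d wa wb x ya yb :: "'a::field"
  assumes two: "(2::'a) = 0" and a: "a \<noteq> 0"
    and za_def: "za = a*((c+d)*ya + al*d*yb)" and zb_def: "zb = a*(d*ya + c*yb)"
  shows "inverse a*c*za + al*inverse a*d*zb = ya + ((c^2 + c*d + al*d^2) + 1) * ya"
    "inverse a*d*za + inverse a*(c+d)*zb = yb + ((c^2 + c*d + al*d^2) + 1) * yb"
    "a*c*(F1 al wa 0 1 0 x za zb) + al*a*d*(F2 wb 0 1 0 x za zb) + b*c*za + al*b*d*zb
      = F1 al ((a*c)*wa + al*(a*d)*wb) (a*b) ((a*c)^2 + al*(a*d)^2) ((a*d)^2) x ya yb
        + ((c^2 + c*d + al*d^2) + 1) * a * b * ya"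
    "a*d*(F1 al wa 0 1 0 x za zb) + a*(c+d)*(F2 wb 0 1 0 x za zb) + b*d*za + b*(c+d)*zb
      = F2 ((a*c)*wb + (a*d)*wa + (a*d)*wb) (a*b) ((a*c)^2 + al*(a*d)^2) ((a*d)^2) x ya yb
        + ((c^2 + c*d + al*d^2) + 1) * a * b * yb"
proof -
  note C2 = c2_neg[OF two] c2_diff[OF two] c2_aa[OF two] c2_aab[OF two] c2_bit0[OF two] c2_bit1[OF two]
  show "inverse a*c*za + al*inverse a*d*zb = ya + ((c^2 + c*d + al*d^2) + 1) * ya"
    using a unfolding za_def zb_def
    by (simp add: field_simps) (simp add: C2 two algebra_simps power2_eq_square)
  show "inverse a*d*za + inverse a*(c+d)*zb = yb + ((c^2 + c*d + al*d^2) + 1) * yb"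
    using a unfolding za_def zb_def
    by (simp add: field_simps) (simp add: C2 two algebra_simps power2_eq_square)
  show "a*c*(F1 al wa 0 1 0 x za zb) + al*a*d*(F2 wb 0 1 0 x za zb) + b*c*za + al*b*d*zb
      = F1 al ((a*c)*wa + al*(a*d)*wb) (a*b) ((a*c)^2 + al*(a*d)^2) ((a*d)^2) x ya yb
        + ((c^2 + c*d + al*d^2) + 1) * a * b * ya"
    using a unfolding za_def zb_def F1_def F2_def
    by (simp add: field_simps) (simp add: C2 two algebra_simps power2_eq_square)
  show "a*d*(F1 al wa 0 1 0 x za zb) + a*(c+d)*(F2 wb 0 1 0 x za zb) + b*d*za + b*(c+d)*zb
      = F2 ((a*c)*wb + (a*d)*wa + (a*d)*wb) (a*b) ((a*c)^2 + al*(a*d)^2) ((a*d)^2) x ya yb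
        + ((c^2 + c*d + al*d^2) + 1) * a * b * yb"
    using a unfolding za_def zb_def F1_def F2_def
    by (simp add: field_simps) (simp add: C2 two algebra_simps power2_eq_square)
qed

lemma image_S:
  fixes al a b c d w1 w2 :: "'a::field"
  assumes two: "(2::'a) = 0" and a: "a \<noteq> 0" and N: "c^2 + c*d + al*d^2 = 1"
  shows "plane_image (M_abcd al a b c d) (Pl al w1 w2 0 1 0) =
     Pl al ((a*c)*w1 + al*(a*d)*w2) ((a*c)*w2 + (a*d)*w1 + (a*d)*w2) (a*b) ((a*c)^2 + al*(a*d)^2) ((a*d)^2)"
proof -
  have N1: "(c^2 + c*d + al*d^2) + 1 = 0" using N two by simp
  show ?thesis
  proof (rule Set.set_eqI, rule HOL.iffI)
    fix z assume "z \<in> plane_image (M_abcd al a b c d) (Pl al w1 w2 0 1 0)"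
    then obtain y where y: "y \<in> Pl al w1 w2 0 1 0" and z: "z = M_abcd al a b c d *v y"
      unfolding plane_image_def by blast
    have "z = M_abcd al a b c d *v pt (y$1) (F1 al w1 0 1 0 (y$1) (y$4) (y$5)) (F2 w2 0 1 0 (y$1) (y$4) (y$5)) (y$4) (y$5)"
      using Pl_elem[OF y] z by simp
    thus "z \<in> Pl al ((a*c)*w1 + al*(a*d)*w2) ((a*c)*w2 + (a*d)*w1 + (a*d)*w2) (a*b) ((a*c)^2 + al*(a*d)^2) ((a*d)^2)"
      unfolding M_mult Pl_def using idA1[OF two a, where al=al and b=b and c=c and d=d and wa=w1 and wb=w2 and x="y$1" and ya="y$4" and yb="y$5"]
        idA2[OF two a, where al=al and b=b and c=c and d=d and wa=w1 and wb=w2 and x="y$1" and ya="y$4" and yb="y$5"] N1 by simp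
  next
    fix z assume z: "z \<in> Pl al ((a*c)*w1 + al*(a*d)*w2) ((a*c)*w2 + (a*d)*w1 + (a*d)*w2) (a*b) ((a*c)^2 + al*(a*d)^2) ((a*d)^2)"
    define x where "x = z$1"
    define y1 where "y1 = z$4"
    define y2 where "y2 = z$5"
    define z1 where "z1 = a*((c+d)*y1 + al*d*y2)"
    define z2 where "z2 = a*(d*y1 + c*y2)"
    note B = idB(1,2)[OF two a z1_def z2_def] idB(3,4)[where wa=w1 and wb=w2 and x=x and b=b, OF two a z1_def z2_def]
    have "z = M_abcd al a b c d *v pt x (F1 al w1 0 1 0 x z1 z2) (F2 w2 0 1 0 x z1 z2) z1 z2"
      unfolding M_mult using Pl_elem[OF z] B N1 unfolding x_def y1_def y2_def
      by simp
    moreover have "pt x (F1 al w1 0 1 0 x z1 z2) (F2 w2 0 1 0 x z1 z2) z1 z2 \<in> Pl al w1 w2 0 1 0"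
      by (rule pt_in_Pl)
    ultimately show "z \<in> plane_image (M_abcd al a b c d) (Pl al w1 w2 0 1 0)"
      unfolding plane_image_def by blast
  qed
qed


lemma nondeg:
  fixes al :: "'a::field"
  assumes irr: "irreducible [:al, 1, 1:]" and two: "(2::'a) = 0"
    and e: "x^2 + x*y + al*y^2 = 0"
  shows "x = 0 \<and> y = 0"
proof (cases "y = 0")
  case True thus ?thesis using e by simp
next
  case False
  define t where "t = x / y"
  have "y^2 * (t^2 + t + al) = 0" using e False unfolding t_def
    by (simp add: field_simps power2_eq_square)
  hence "t^2 + t + al = 0" using False by simp
  hence r: "poly [:al, 1, 1:] t = 0" by (simp add: algebra_simps power2_eq_square)
  then obtain q where pq: "[:al, 1, 1:] = [:- t, 1:] * q" using poly_eq_0_iff_dvd by blast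
  have q0: "q \<noteq> 0" using pq by auto
  have "degree [:al, 1, 1:] = 2" by simp
  moreover have "degree [:al, 1, 1:] = degree ([:- t, 1:] * q)" using pq by (rule arg_cong)
  moreover have "degree ([:- t, 1:] * q) = degree [:- t, 1:] + degree q"
    using q0 by (intro degree_mult_eq) auto
  moreover have "degree [:- t, 1::'a:] = 1" by simp
  ultimately have "degree q = 1" by linarith
  hence "\<not> is_unit q" using is_unit_iff_degree[OF q0] by simp
  moreover have "\<not> is_unit [:- t, 1:]" using is_unit_iff_degree[of "[:- t, 1:]"] by simp
  ultimately show ?thesis using irreducibleD[OF irr pq] by blast
qed


lemma cross_nz:
  fixes al a b c d e f g h w1 w2 :: "'a::field"
  assumes two: "(2::'a) = 0"
    and nd: "\<And>x y. x^2 + x*y + al*y^2 = 0 \<Longrightarrow> x = 0 \<and> y = 0"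
    and a: "a \<noteq> 0" and e: "e \<noteq> 0"
    and N: "c^2 + c*d + al*d^2 = 1" and N': "g^2 + g*h + al*h^2 = 1"
    and w2: "w2 \<noteq> 0" and ne: "(a,b,c,d) \<noteq> (e,f,g,h)"
  defines "W1 \<equiv> (a*c)*w1 + al*(a*d)*w2" and "W2 \<equiv> (a*c)*w2 + (a*d)*w1 + (a*d)*w2"
    and "W1' \<equiv> (e*g)*w1 + al*(e*h)*w2" and "W2' \<equiv> (e*g)*w2 + (e*h)*w1 + (e*h)*w2"
    and "dm \<equiv> a*b - e*f" and "dn1 \<equiv> ((a*c)^2 + al*(a*d)^2) - ((e*g)^2 + al*(e*h)^2)"
    and "dn2 \<equiv> (a*d)^2 - (e*h)^2"
  shows "crossv (W1 - W1') (dm + dn1) (dn1 + al*dn2) (W2 - W2') dn2 (dm + dn1 + 2*dn2) \<noteq> (0,0,0)"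
proof
  note C2 = c2_neg[OF two] c2_diff[OF two] c2_aa[OF two] c2_aab[OF two] c2_bit0[OF two] c2_bit1[OF two]
  assume cz: "crossv (W1 - W1') (dm + dn1) (dn1 + al*dn2) (W2 - W2') dn2 (dm + dn1 + 2*dn2) = (0,0,0)"
  define D1 where "D1 = a*c - e*g"
  define D2 where "D2 = a*d - e*h"
  define nD where "nD = D1^2 + D1*D2 + al*D2^2"
  have i1: "(dm + dn1)*(dm + dn1 + 2*dn2) - (dn1 + al*dn2)*dn2 = (dm + nD)^2"
    unfolding dm_def dn1_def dn2_def nD_def D1_def D2_def
    by (simp add: C2 two algebra_simps power2_eq_square)
  have i2: "(dn1 + al*dn2)*(W2 - W2') - (W1 - W1')*(dm + dn1 + 2*dn2) = D1*nD*w2 + (dm + nD)*(W1 - W1')"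
    unfolding dm_def dn1_def dn2_def nD_def D1_def D2_def W1_def W2_def W1'_def W2'_def
    by (simp add: C2 two algebra_simps power2_eq_square)
  have i3: "(W1 - W1')*dn2 - (dm + dn1)*(W2 - W2') = D2*nD*w2 + (dm + nD)*(W2 - W2')"
    unfolding dm_def dn1_def dn2_def nD_def D1_def D2_def W1_def W2_def W1'_def W2'_def
    by (simp add: C2 two algebra_simps power2_eq_square)
  from cz have "(dm + nD)^2 = 0" using i1 unfolding crossv_def by simp
  hence dmn: "dm + nD = 0" by simp
  from cz have z2: "D1*nD*w2 = 0" "D2*nD*w2 = 0" using i2 i3 dmn unfolding crossv_def by simp_all
  show False
  proof (cases "D1 = 0 \<and> D2 = 0")
    case True
    hence "nD = 0" unfolding nD_def by simp
    hence "dm = 0" using dmn by simp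
    hence ab: "a*b = e*f" unfolding dm_def by simp
    from True have ac: "a*c = e*g" and ad: "a*d = e*h" unfolding D1_def D2_def by simp_all
    have "a^2 * (c^2 + c*d + al*d^2) = (a*c)^2 + (a*c)*(a*d) + al*(a*d)^2"
      by (simp add: algebra_simps power2_eq_square)
    also have "\<dots> = (e*g)^2 + (e*g)*(e*h) + al*(e*h)^2" using ac ad by simp
    also have "\<dots> = e^2 * (g^2 + g*h + al*h^2)"
      by (simp add: algebra_simps power2_eq_square)
    finally have "a^2 = e^2" using N N' by simp
    hence "(a - e)^2 = 0" by (simp add: C2 two algebra_simps power2_eq_square)
    hence ae: "a = e" by simp
    hence "b = f" "c = g" "d = h" using ab ac ad a by simp_all
    thus False using ne ae by simp
  next
    case False
    hence "nD \<noteq> 0" using nd[of D1 D2] unfolding nD_def by blast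
    thus False using z2 False w2 by auto
  qed
qed

lemma sq_inj:
  fixes x y :: "'a::field"
  assumes two: "(2::'a) = 0" and "x^2 = y^2" shows "x = y"
proof -
  note C2 = c2_neg[OF two] c2_diff[OF two] c2_aa[OF two] c2_aab[OF two] c2_bit0[OF two] c2_bit1[OF two]
  have "(x - y)^2 = x^2 - y^2" by (simp add: C2 two algebra_simps power2_eq_square)
  thus ?thesis using assms(2) by simp
qed

lemma sq_surj:
  fixes y :: "'a::{finite,field}"
  assumes two: "(2::'a) = 0" shows "\<exists>x. x^2 = y"
proof -
  have "inj (\<lambda>x::'a. x^2)" using sq_inj[OF two] by (auto intro: injI)
  hence "surj (\<lambda>x::'a. x^2)" using finite_UNIV_inj_surj[of "\<lambda>x::'a. x^2"] by simp
  thus ?thesis by (metis surjD)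
qed

lemma card_U:
  fixes al :: "'a::{finite,field}"
  assumes two: "(2::'a) = 0"
    and nd: "\<And>x y. x^2 + x*y + al*y^2 = 0 \<Longrightarrow> x = 0 \<and> y = 0"
  shows "card {(c,d). c^2 + c*d + al*d^2 = (1::'a)} = CARD('a) + 1"
proof -
  define U where "U = {(c,d). c^2 + c*d + al*d^2 = (1::'a)}"
  define Z where "Z = (UNIV :: ('a \<times> 'a) set) - {(0,0)}"
  define phi where "phi = (\<lambda>(l::'a, (c::'a, d::'a)). (l*c, l*d))"
  have N_scale: "(l*c)^2 + (l*c)*(l*d) + al*(l*d)^2 = l^2 * (c^2 + c*d + al*d^2)" for l c d :: 'a
    by (simp add: algebra_simps power2_eq_square)
  have bij: "bij_betw phi ((UNIV - {0::'a}) \<times> U) Z"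
  proof (rule bij_betwI')
    fix x y assume x: "x \<in> (UNIV - {0::'a}) \<times> U" and y: "y \<in> (UNIV - {0::'a}) \<times> U"
    obtain l c d where xe: "x = (l,(c,d))" by (metis prod.exhaust)
    obtain l' c' d' where ye: "y = (l',(c',d'))" by (metis prod.exhaust)
    have l: "l \<noteq> 0" "l' \<noteq> 0" and U: "c^2 + c*d + al*d^2 = 1" "c'^2 + c'*d' + al*d'^2 = 1"
      using x y xe ye by (auto simp: U_def)
    show "(phi x = phi y) = (x = y)"
    proof
      assume "phi x = phi y"
      hence e: "l*c = l'*c'" "l*d = l'*d'" by (auto simp: phi_def xe ye)
      have "l^2 = l'^2" using N_scale[of l c d] N_scale[of l' c' d'] e U by simp
      hence "l = l'" by (rule sq_inj[OF two])
      thus "x = y" using e l by (simp add: xe ye)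
    qed simp
  next
    fix x assume x: "x \<in> (UNIV - {0::'a}) \<times> U"
    obtain l c d where xe: "x = (l,(c,d))" by (metis prod.exhaust)
    have "l \<noteq> 0" "c^2 + c*d + al*d^2 = 1" using x xe by (auto simp: U_def)
    thus "phi x \<in> Z" by (auto simp: Z_def phi_def xe)
  next
    fix z assume z: "z \<in> Z"
    obtain x y where ze: "z = (x,y)" by (metis prod.exhaust)
    define n where "n = x^2 + x*y + al*y^2"
    have n0: "n \<noteq> 0" using nd[of x y] z unfolding n_def Z_def ze by auto
    obtain l where l: "l^2 = n" using sq_surj[OF two] by blast
    have l0: "l \<noteq> 0" using l n0 by auto
    have "l^2 * ((x/l)^2 + (x/l)*(y/l) + al*(y/l)^2) = n"
      using l0 unfolding n_def by (simp add: field_simps power2_eq_square)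
    hence "n * ((x/l)^2 + (x/l)*(y/l) + al*(y/l)^2) = n * 1" using l by simp
    hence "(x/l)^2 + (x/l)*(y/l) + al*(y/l)^2 = 1" using n0 by (rule mult_left_cancel[THEN iffD1, rotated])
    hence "(x/l, y/l) \<in> U" by (simp add: U_def)
    moreover have "phi (l, (x/l, y/l)) = z" using l0 by (simp add: phi_def ze)
    ultimately show "\<exists>x'\<in>(UNIV - {0::'a}) \<times> U. z = phi x'" using l0 by (metis DiffI UNIV_I mem_Sigma_iff singletonD)
  qed
  have "card ((UNIV - {0::'a}) \<times> U) = card Z" using bij_betw_same_card[OF bij] .
  moreover have "card ((UNIV - {0::'a}) \<times> U) = (CARD('a) - 1) * card U"
    by (simp add: card_cartesian_product card_Diff_singleton)
  moreover have "card Z = CARD('a) * CARD('a) - 1"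
  proof -
    have "card (UNIV::('a \<times> 'a) set) = card ((UNIV::'a set) \<times> (UNIV::'a set))" by simp
    also have "\<dots> = CARD('a) * CARD('a)" by (rule card_cartesian_product)
    finally show ?thesis unfolding Z_def by (simp add: card_Diff_singleton)
  qed
  ultimately have e: "(CARD('a) - 1) * card U = CARD('a) * CARD('a) - 1" by simp
  have q2: "CARD('a) \<ge> 2"
  proof -
    have "{0::'a, 1} \<subseteq> UNIV" by simp
    hence "card {0::'a, 1} \<le> CARD('a)" by (intro card_mono) auto
    thus ?thesis by simp
  qed
  have "CARD('a) * CARD('a) - 1 = (CARD('a) - 1) * (CARD('a) + 1)"
    using q2 by (simp add: algebra_simps)
  with e have "(CARD('a) - 1) * card U = (CARD('a) - 1) * (CARD('a) + 1)" by simp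
  moreover have "CARD('a) - 1 \<noteq> 0" using q2 by simp
  ultimately have "card U = CARD('a) + 1" using mult_left_cancel by blast
  thus ?thesis unfolding U_def .
qed

lemma Pl_eq_D:
  assumes "Pl al W1 W2 m n1 n2 = Pl al W1' W2' m' n1' n2'"
  shows "W1 = W1' \<and> W2 = W2' \<and> m + n1 = m' + n1' \<and> n2 = n2' \<and> n1 + al*n2 = n1' + al*n2'"
proof -
  have "pt x (F1 al W1 m n1 n2 x y1 y2) (F2 W2 m n1 n2 x y1 y2) y1 y2 \<in> Pl al W1' W2' m' n1' n2'" for x y1 y2
    using pt_in_Pl assms by metis
  hence e: "F1 al W1 m n1 n2 x y1 y2 = F1 al W1' m' n1' n2' x y1 y2"
           "F2 W2 m n1 n2 x y1 y2 = F2 W2' m' n1' n2' x y1 y2" for x y1 y2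
    by (simp_all add: Pl_def)
  show ?thesis using e[of 1 0 0] e[of 0 1 0] e[of 0 0 1] by (simp add: F1_def F2_def)
qed

definition params :: "'a::field \<Rightarrow> ('a \<times> 'a \<times> 'a \<times> 'a) set" where
  "params al = (UNIV - {0}) \<times> (UNIV \<times> {(c,d). c^2 + c*d + al*d^2 = 1})"

lemma groupG_params: "groupG al = (\<lambda>(a,b,c,d). M_abcd al a b c d) ` params al"
  unfolding groupG_def params_def by (auto simp: image_def)

lemma main_two:
  fixes al :: "'a::{finite, field}"
  assumes two: "(2::'a) = 0" and irr: "irreducible [:al, 1, 1:]"
  shows "\<exists>Orbs. Orbs \<subseteq> plane_orbits (groupG al)
           \<and> card Orbs = CARD('a)^2 - CARD('a)
           \<and> (\<forall>Orb\<in>Orbs. card Orb = CARD('a)^3 - CARD('a)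
                 \<and> (\<forall>S\<in>Orb. \<forall>T\<in>Orb. S \<noteq> T \<longrightarrow> meet_in_one_point S T))"
proof -
  note C2 = c2_neg[OF two] c2_diff[OF two] c2_aa[OF two] c2_aab[OF two] c2_bit0[OF two] c2_bit1[OF two]
  have nd: "\<And>x y. x^2 + x*y + al*y^2 = 0 \<Longrightarrow> x = 0 \<and> y = 0" using nondeg[OF irr two] by blast
  define img where "img = (\<lambda>w1 w2 (p::'a \<times> 'a \<times> 'a \<times> 'a). case p of (a,b,c,d) \<Rightarrow> plane_image (M_abcd al a b c d) (Pl al w1 w2 0 1 0))"
  have img_eq: "img w1 w2 (a,b,c,d) = Pl al ((a*c)*w1 + al*(a*d)*w2) ((a*c)*w2 + (a*d)*w1 + (a*d)*w2) (a*b) ((a*c)^2 + al*(a*d)^2) ((a*d)^2)"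
    if "(a,b,c,d) \<in> params al" for w1 w2 a b c d
    using that unfolding img_def params_def by (auto intro!: image_S[OF two])
  have orbit_eq: "plane_orbit (groupG al) (Pl al w1 w2 0 1 0) = img w1 w2 ` params al" for w1 w2
  proof -
    have "plane_orbit (groupG al) (Pl al w1 w2 0 1 0) = (\<lambda>M. plane_image M (Pl al w1 w2 0 1 0)) ` groupG al"
      unfolding plane_orbit_def by blast
    also have "\<dots> = (\<lambda>p. plane_image ((\<lambda>(a,b,c,d). M_abcd al a b c d) p) (Pl al w1 w2 0 1 0)) ` params al"
      unfolding groupG_params image_image ..
    also have "\<dots> = img w1 w2 ` params al"
      unfolding img_def by (intro image_cong refl) (auto split: prod.splits)
    finally show ?thesis .
  qed
  have meet: "meet_in_one_point (img w1 w2 p) (img w1 w2 p')"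
    if hp: "p \<in> params al" and hp': "p' \<in> params al" and hne: "p \<noteq> p'" and hw: "w2 \<noteq> 0" for w1 w2 p p'
  proof -
    obtain a b c d where p: "p = (a,b,c,d)" by (metis prod.exhaust)
    obtain e f g h where p': "p' = (e,f,g,h)" by (metis prod.exhaust)
    have pa: "a \<noteq> 0" "c^2 + c*d + al*d^2 = 1" using hp p by (auto simp: params_def)
    have pe: "e \<noteq> 0" "g^2 + g*h + al*h^2 = 1" using hp' p' by (auto simp: params_def)
    have ne: "(a,b,c,d) \<noteq> (e,f,g,h)" using hne p p' by simp
    show ?thesis
      unfolding p p' img_eq[OF hp[unfolded p]] img_eq[OF hp'[unfolded p']]
      by (rule Pl_meet, rule cross_nz[OF two nd pa(1) pe(1) pa(2) pe(2) hw ne])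
  qed
  have img_in: "img w1 w2 p \<in> {Pl al W1 W2 m n1 n2 | W1 W2 m n1 n2. True}" if "p \<in> params al" for w1 w2 p
  proof -
    obtain a b c d where p: "p = (a,b,c,d)" by (metis prod.exhaust)
    show ?thesis unfolding p img_eq[OF that[unfolded p]] by blast
  qed
  have inj: "inj_on (img w1 w2) (params al)" if "w2 \<noteq> 0" for w1 w2
  proof (rule inj_onI, rule ccontr)
    fix p p' assume pp: "p \<in> params al" "p' \<in> params al" "img w1 w2 p = img w1 w2 p'" "p \<noteq> p'"
    have "meet_in_one_point (img w1 w2 p) (img w1 w2 p')" using meet[OF pp(1,2,4) that, of w1] .
    hence "meet_in_one_point (img w1 w2 p) (img w1 w2 p)" using pp(3) by simp
    hence d1: "vec.dim (img w1 w2 p) = 1" by (simp add: meet_in_one_point_def)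
    obtain W1 W2 m n1 n2 where e: "img w1 w2 p = Pl al W1 W2 m n1 n2" using img_in[OF pp(1)] by blast
    have d3: "vec.dim (img w1 w2 p) = 3" unfolding e by (rule Pl_dim)
    from d1 d3 show False by simp
  qed
  have cardP: "card (params al) = CARD('a)^3 - CARD('a)"
  proof -
    have "card (params al) = card (UNIV - {0::'a}) * (card (UNIV::'a set) * card {(c,d). c^2 + c*d + al*d^2 = (1::'a)})"
      unfolding params_def by (simp only: card_cartesian_product)
    also have "\<dots> = (CARD('a) - 1) * (CARD('a) * (CARD('a) + 1))"
      by (simp only: card_U[OF two nd] card_Diff_singleton[OF UNIV_I])
    also have "\<dots> = CARD('a)^3 - CARD('a)"
    proof -
      obtain k where k: "CARD('a) = Suc k" using finite_UNIV_card_ge_0[where 'a='a] by (metis gr0_implies_Suc finite)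
      show ?thesis unfolding k by (simp add: power3_eq_cube algebra_simps)
    qed
    finally show ?thesis .
  qed
  have id_par: "(1,0,1,0) \<in> params al" by (simp add: params_def)
  have self: "Pl al w1 w2 0 1 0 \<in> plane_orbit (groupG al) (Pl al w1 w2 0 1 0)" for w1 w2
  proof -
    have "img w1 w2 (1,0,1,0) = Pl al w1 w2 0 1 0" using img_eq[OF id_par, of w1 w2] by simp
    thus ?thesis unfolding orbit_eq by (rule image_eqI[OF sym id_par])
  qed
  define Wset where "Wset = {(w1::'a, w2::'a). w2 \<noteq> 0}"
  define Orbs where "Orbs = (\<lambda>(w1,w2). plane_orbit (groupG al) (Pl al w1 w2 0 1 0)) ` Wset"
  have sub: "Orbs \<subseteq> plane_orbits (groupG al)"
  proof
    fix Ob assume "Ob \<in> Orbs"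
    then obtain w1 w2 where "Ob = plane_orbit (groupG al) (Pl al w1 w2 0 1 0)"
      unfolding Orbs_def by auto
    moreover have "Pl al w1 w2 0 1 0 \<in> pg4_planes"
      unfolding pg4_planes_def using Pl_subspace Pl_dim by blast
    ultimately show "Ob \<in> plane_orbits (groupG al)" unfolding plane_orbits_def by blast
  qed
  have injW: "inj_on (\<lambda>(w1,w2). plane_orbit (groupG al) (Pl al w1 w2 0 1 0)) Wset"
  proof (rule inj_onI)
    fix u v assume u: "u \<in> Wset" and v: "v \<in> Wset"
      and eq: "(\<lambda>(w1,w2). plane_orbit (groupG al) (Pl al w1 w2 0 1 0)) u = (\<lambda>(w1,w2). plane_orbit (groupG al) (Pl al w1 w2 0 1 0)) v"
    obtain w1 w2 where ue: "u = (w1,w2)" by (metis prod.exhaust)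
    obtain w1' w2' where ve: "v = (w1',w2')" by (metis prod.exhaust)
    have "Pl al w1' w2' 0 1 0 \<in> plane_orbit (groupG al) (Pl al w1 w2 0 1 0)"
      using eq self[of w1' w2'] unfolding ue ve by simp
    then obtain p where p: "p \<in> params al" "Pl al w1' w2' 0 1 0 = img w1 w2 p"
      unfolding orbit_eq by blast
    obtain a b c d where pe: "p = (a,b,c,d)" by (metis prod.exhaust)
    have pa: "a \<noteq> 0" "c^2 + c*d + al*d^2 = 1" using p(1) pe by (auto simp: params_def)
    have E: "w1' = (a*c)*w1 + al*(a*d)*w2" "w2' = (a*c)*w2 + (a*d)*w1 + (a*d)*w2"
      "0 + 1 = a*b + ((a*c)^2 + al*(a*d)^2)" "0 = (a*d)^2"
      "1 + al*0 = ((a*c)^2 + al*(a*d)^2) + al*(a*d)^2"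
      using Pl_eq_D[OF p(2)[unfolded pe img_eq[OF p(1)[unfolded pe]]]] by simp_all
    have d0: "d = 0" using E(4) pa(1) by simp
    hence "c^2 = 1^2" using pa(2) by simp
    hence c1: "c = 1" by (rule sq_inj[OF two])
    hence "a^2 = 1^2" using E(5) d0 by simp
    hence a1: "a = 1" by (rule sq_inj[OF two])
    show "u = v" using E(1,2) a1 c1 d0 ue ve by simp
  qed
  have "card Orbs = card Wset" unfolding Orbs_def by (rule card_image[OF injW])
  also have "card Wset = CARD('a) * (CARD('a) - 1)"
  proof -
    have "Wset = UNIV \<times> (UNIV - {0})" unfolding Wset_def by auto
    thus ?thesis by (simp add: card_cartesian_product card_Diff_singleton)
  qed
  also have "\<dots> = CARD('a)^2 - CARD('a)" by (simp add: power2_eq_square diff_mult_distrib2)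
  finally have cardO: "card Orbs = CARD('a)^2 - CARD('a)" .
  have props: "card Orb = CARD('a)^3 - CARD('a) \<and> (\<forall>S\<in>Orb. \<forall>T\<in>Orb. S \<noteq> T \<longrightarrow> meet_in_one_point S T)"
    if "Orb \<in> Orbs" for Orb
  proof -
    from that obtain u where u: "u \<in> Wset" "Orb = (\<lambda>(w1,w2). plane_orbit (groupG al) (Pl al w1 w2 0 1 0)) u"
      unfolding Orbs_def by blast
    obtain w1 w2 where ue: "u = (w1,w2)" by (metis prod.exhaust)
    have w: "w2 \<noteq> 0" using u ue by (simp add: Wset_def)
    have O: "Orb = img w1 w2 ` params al" using u ue orbit_eq by simp
    have "card Orb = CARD('a)^3 - CARD('a)" unfolding O card_image[OF inj[OF w]] cardP ..
    moreover have "\<forall>S\<in>Orb. \<forall>T\<in>Orb. S \<noteq> T \<longrightarrow> meet_in_one_point S T"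
      unfolding O using meet[OF _ _ _ w] by blast
    ultimately show ?thesis by blast
  qed
  show ?thesis using sub cardO props by blast
qed

lemma char2_from_card:
  assumes q: "CARD('a::{finite,field}) = 2 ^ h"
  shows "(2::'a) = 0"
proof -
  have pos: "CHAR('a) > 0" by (rule finite_imp_CHAR_pos) simp
  have pr: "prime CHAR('a)" by (rule prime_CHAR_semidom[OF pos])
  have "CHAR('a) dvd 2 ^ h" using CHAR_dvd_CARD[where 'a='a] q by simp
  hence "CHAR('a) dvd 2" using pr prime_dvd_power by blast
  hence "CHAR('a) \<le> 2" by (rule dvd_imp_le) simp
  moreover have "CHAR('a) > 1" using pr prime_gt_1_nat by blast
  ultimately have "CHAR('a) = 2" by simp
  hence "of_nat 2 = (0::'a)" by (metis of_nat_CHAR)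
  thus ?thesis by simp
qed


theorem proposition3p5:
  fixes \<alpha> :: "'a::{finite, field}" and h :: nat
  assumes q: "CARD('a) = 2 ^ h"
    and irr: "irreducible [:\<alpha>, 1, 1:]"
  shows "\<exists>Orbs. Orbs \<subseteq> plane_orbits (groupG \<alpha>)
           \<and> card Orbs = CARD('a)^2 - CARD('a)
           \<and> (\<forall>Orb\<in>Orbs. card Orb = CARD('a)^3 - CARD('a)
                 \<and> (\<forall>S\<in>Orb. \<forall>T\<in>Orb. S \<noteq> T \<longrightarrow> meet_in_one_point S T))"
  by (rule main_two[OF char2_from_card[OF q] irr])

end
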